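(* Consider the $64$ constraints (subsets of the six conditions $C_{in}^{\rightarrow},C_{in}^{\leftarrow},C_{out}^{\rightarrow},C_{out}^{\leftarrow},C_{undec}^{\rightarrow},C_{undec}^{\leftarrow}$). Then: (a) every constraint of cardinality $0$, $1$ or $2$ is weak; (b) among the $20$ constraints of cardinality $3$, exactly $\{C_{in}^{\rightarrow},C_{out}^{\rightarrow},C_{undec}^{\rightarrow}\}$ and $\{C_{in}^{\leftarrow},C_{out}^{\leftarrow},C_{undec}^{\leftarrow}\}$ are correct and non-redundant, and the other $18$ are weak; (c) among the $15$ constraints of cardinality $4$, $\{C_{in}^{\rightarrow},C_{in}^{\leftarrow},C_{out}^{\rightarrow},C_{out}^{\leftarrow}\}$, $\{C_{out}^{\rightarrow},C_{out}^{\leftarrow},C_{undec}^{\rightarrow},C_{undec}^{\leftarrow}\}$ and $\{C_{in}^{\rightarrow},C_{in}^{\leftarrow},C_{undec}^{\rightarrow},C_{undec}^{\leftarrow}\}$ are correct and non-redundant, the six constraints $\{C_{undec}^{\rightarrow},C_{undec}^{\leftarrow},C_{in}^{\rightarrow},C_{out}^{\leftarrow}\}$, $\{C_{undec}^{\rightarrow},C_{undec}^{\leftarrow},C_{in}^{\leftarrow},C_{out}^{\rightarrow}\}$, $\{C_{out}^{\rightarrow},C_{out}^{\leftarrow},C_{in}^{\rightarrow},C_{undec}^{\leftarrow}\}$, $\{C_{out}^{\rightarrow},C_{out}^{\leftarrow},C_{in}^{\leftarrow},C_{undec}^{\rightarrow}\}$, $\{C_{in}^{\rightarrow},C_{in}^{\leftarrow},C_{out}^{\rightarrow},C_{undec}^{\leftarrow}\}$,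 $\{C_{in}^{\rightarrow},C_{in}^{\leftarrow},C_{out}^{\leftarrow},C_{undec}^{\rightarrow}\}$ are weak, and the remaining $6$ are redundant; (d) every constraint of cardinality $5$ or $6$ is redundant.
   Context: An argumentation framework is a pair $(\mathcal{A},\mathcal{R})$ with $\mathcal{A}$ a finite set of arguments and $\mathcal{R}\subseteq\mathcal{A}\times\mathcal{A}$ (self-attacks allowed); $a^{-}=\{b:(b,a)\in\mathcal{R}\}$. For a total function $\mathcal{L}ab:\mathcal{A}\to\{\mathtt{in},\mathtt{out},\mathtt{undec}\}$ and an argument $a$, define the six conditions: $C_{in}^{\rightarrow}$: $\mathcal{L}ab(a)=\mathtt{in}\Rightarrow \forall b\in a^-\ \mathcal{L}ab(b)=\mathtt{out}$; $C_{in}^{\leftarrow}$: $(\forall b\in a^-\ \mathcal{L}ab(b)=\mathtt{out})\Rightarrow \mathcal{L}ab(a)=\mathtt{in}$; $C_{out}^{\rightarrow}$: $\mathcal{L}ab(a)=\mathtt{out}\Rightarrow \exists b\in a^-\ \mathcal{L}ab(b)=\mathtt{in}$; $C_{out}^{\leftarrow}$: $(\exists b\in a^-\ \mathcal{L}ab(b)=\mathtt{in})\Rightarrow \mathcal{L}ab(a)=\mathtt{out}$; $C_{undec}^{\rightarrow}$: $\mathcal{L}ab(a)=\mathtt{undec}\Rightarrow (\forall b\in a^-\ \mathcal{L}ab(b)\neq\mathtt{in}\ \wedge\ \exists c\in a^-\ \mathcal{L}ab(c)=\mathtt{undec})$; $C_{undec}^{\leftarrow}$: $(\forall b\in a^-\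 \mathcal{L}ab(b)\neq\mathtt{in}\ \wedge\ \exists c\in a^-\ \mathcal{L}ab(c)=\mathtt{undec})\Rightarrow \mathcal{L}ab(a)=\mathtt{undec}$. $\mathcal{L}ab$ is a complete labelling iff it satisfies all six conditions for every $a\in\mathcal{A}$. A constraint is any subset of these six conditions; a labelling satisfies a constraint if it satisfies each condition in it for every argument. A constraint is: weak if there exist a finite argumentation framework and a total labelling satisfying it that is not complete; correct if, for every finite argumentation framework, the total labellings satisfying it are exactly the complete labellings; correct and non-redundant if it is correct and every strict subset of it is weak; redundant if it is correct and some strict subset of it is correct. *)

theory Defs
  imports Main
begin

datatype label = In | Out | Undec

text \<open>The six conditions: Cin-> , Cin<- , Cout-> , Cout<- , Cundec-> , Cundec<- .\<close>
datatype cond = InTo | InFrom | OutTo | OutFrom | UndecTo | UndecFrom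

lemma UNIV_cond: "(UNIV :: cond set) = {InTo, InFrom, OutTo, OutFrom, UndecTo, UndecFrom}"
  by (auto intro: cond.exhaust)

instance cond :: finite
  by standard (simp add: UNIV_cond)

text \<open>Arguments are drawn from nat; an argumentation framework is a finite set A of
  arguments with an attack relation R on A. A labelling is a function on arguments
  (only its values on A matter).\<close>

definition attackers :: "(nat \<times> nat) set \<Rightarrow> nat \<Rightarrow> nat set" where
  "attackers R a = {b. (b, a) \<in> R}"

fun sat_cond :: "(nat \<times> nat) set \<Rightarrow> (nat \<Rightarrow> label) \<Rightarrow> cond \<Rightarrow> nat \<Rightarrow> bool" where
  "sat_cond R L InTo a = (L a = In \<longrightarrow> (\<forall>b\<in>attackers R a. L b = Out))"
| "sat_cond R L InFrom a = ((\<forall>b\<in>attackers R a. L b = Out) \<longrightarrow> L a = In)"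
| "sat_cond R L OutTo a = (L a = Out \<longrightarrow> (\<exists>b\<in>attackers R a. L b = In))"
| "sat_cond R L OutFrom a = ((\<exists>b\<in>attackers R a. L b = In) \<longrightarrow> L a = Out)"
| "sat_cond R L UndecTo a = (L a = Undec \<longrightarrow>
      ((\<forall>b\<in>attackers R a. L b \<noteq> In) \<and> (\<exists>c\<in>attackers R a. L c = Undec)))"
| "sat_cond R L UndecFrom a = (((\<forall>b\<in>attackers R a. L b \<noteq> In) \<and> (\<exists>c\<in>attackers R a. L c = Undec))
      \<longrightarrow> L a = Undec)"

definition is_AF :: "nat set \<Rightarrow> (nat \<times> nat) set \<Rightarrow> bool" where
  "is_AF A R \<longleftrightarrow> finite A \<and> R \<subseteq> A \<times> A"

definition satisfies :: "nat set \<Rightarrow> (nat \<times> nat) set \<Rightarrow> (nat \<Rightarrow> label) \<Rightarrow> cond set \<Rightarrow> bool" where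
  "satisfies A R L C \<longleftrightarrow> (\<forall>c\<in>C. \<forall>a\<in>A. sat_cond R L c a)"

definition complete_lab :: "nat set \<Rightarrow> (nat \<times> nat) set \<Rightarrow> (nat \<Rightarrow> label) \<Rightarrow> bool" where
  "complete_lab A R L \<longleftrightarrow> satisfies A R L UNIV"

definition weak :: "cond set \<Rightarrow> bool" where
  "weak C \<longleftrightarrow> (\<exists>A R L. is_AF A R \<and> satisfies A R L C \<and> \<not> complete_lab A R L)"

definition correct :: "cond set \<Rightarrow> bool" where
  "correct C \<longleftrightarrow> (\<forall>A R L. is_AF A R \<longrightarrow> (satisfies A R L C \<longleftrightarrow> complete_lab A R L))"

definition correct_nonredundant :: "cond set \<Rightarrow> bool" where
  "correct_nonredundant C \<longleftrightarrow> correct C \<and> (\<forall>C'. C' \<subset> C \<longrightarrow> weak C')"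

definition redundant :: "cond set \<Rightarrow> bool" where
  "redundant C \<longleftrightarrow> correct C \<and> (\<exists>C'. C' \<subset> C \<and> correct C')"

end

theory Submission
  imports Defs
begin

definition good :: "cond set \<Rightarrow> bool" where
  "good C \<longleftrightarrow> (InTo\<in>C \<and> OutTo\<in>C \<and> UndecTo\<in>C) \<or> (InFrom\<in>C \<and> OutFrom\<in>C \<and> UndecFrom\<in>C)
     \<or> (InTo\<in>C \<and> InFrom\<in>C \<and> OutTo\<in>C \<and> OutFrom\<in>C) \<or> (OutTo\<in>C \<and> OutFrom\<in>C \<and> UndecTo\<in>C \<and> UndecFrom\<in>C)
     \<or> (InTo\<in>C \<and> InFrom\<in>C \<and> UndecTo\<in>C \<and> UndecFrom\<in>C)"

lemma good_mono: "good C' \<Longrightarrow> C' \<subseteq> C \<Longrightarrow> good C"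
  unfolding good_def by blast

lemma lab3: "(x::label) \<noteq> In \<Longrightarrow> x \<noteq> Out \<Longrightarrow> x = Undec" by (cases x) auto
lemma pw_all:
  assumes "(sat_cond R L InTo a \<and> sat_cond R L OutTo a \<and> sat_cond R L UndecTo a)
     \<or> (sat_cond R L InFrom a \<and> sat_cond R L OutFrom a \<and> sat_cond R L UndecFrom a)
     \<or> (sat_cond R L InTo a \<and> sat_cond R L InFrom a \<and> sat_cond R L OutTo a \<and> sat_cond R L OutFrom a)
     \<or> (sat_cond R L OutTo a \<and> sat_cond R L OutFrom a \<and> sat_cond R L UndecTo a \<and> sat_cond R L UndecFrom a)
     \<or> (sat_cond R L InTo a \<and> sat_cond R L InFrom a \<and> sat_cond R L UndecTo a \<and> sat_cond R L UndecFrom a)"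
  shows "sat_cond R L c a"
  using assms
  apply (cases c; cases "L a"; simp)
  apply (auto dest: lab3)
  apply force+
  done

lemma good_correct: "good C \<Longrightarrow> correct C"
  unfolding correct_def complete_lab_def satisfies_def
proof (intro allI impI iffI)
  fix A R L
  assume g: "good C" and s: "\<forall>c\<in>C. \<forall>a\<in>A. sat_cond R L c a"
  show "\<forall>c\<in>UNIV. \<forall>a\<in>A. sat_cond R L c a"
  proof (intro ballI)
    fix c a assume "a \<in> A"
    then have h: "\<And>c. c \<in> C \<Longrightarrow> sat_cond R L c a" using s by blast
    show "sat_cond R L c a"
      apply (rule pw_all) using g unfolding good_def by (elim disjE conjE) (meson h)+
  qed
qed auto

lemma weak_iff: "weak C \<longleftrightarrow> \<not> correct C"
  unfolding weak_def correct_def complete_lab_def satisfies_def by blast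

lemma weak_mono: "weak C \<Longrightarrow> C' \<subseteq> C \<Longrightarrow> weak C'"
  unfolding weak_def satisfies_def by blast

lemmas simps = weak_def satisfies_def complete_lab_def is_AF_def attackers_def UNIV_cond

lemma w1: "weak {InFrom, OutTo, UndecTo, UndecFrom}"
  unfolding weak_def
  apply (rule exI[of _ "{0,1}"], rule exI[of _ "{(0,1)}"], rule exI[of _ "\<lambda>x. In"])
  by (simp add: simps)

lemma w2: "weak {InFrom, OutTo, OutFrom, UndecTo}"
  unfolding weak_def
  apply (rule exI[of _ "{0,1}"], rule exI[of _ "{(0,0),(0,1)}"], rule exI[of _ "\<lambda>x. if x = 0 then Undec else In"])
  by (simp add: simps)

lemma w3: "weak {InTo, OutFrom, UndecTo, UndecFrom}"
  unfolding weak_def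
  apply (rule exI[of _ "{0}"], rule exI[of _ "{}"], rule exI[of _ "\<lambda>x. Out"])
  by (simp add: simps)

lemma w4: "weak {InTo, InFrom, OutFrom, UndecTo}"
  unfolding weak_def
  apply (rule exI[of _ "{0,1}"], rule exI[of _ "{(0,0),(0,1)}"], rule exI[of _ "\<lambda>x. if x = 0 then Undec else Out"])
  by (simp add: simps)

lemma w5: "weak {InTo, OutTo, OutFrom, UndecFrom}"
  unfolding weak_def
  apply (rule exI[of _ "{0}"], rule exI[of _ "{}"], rule exI[of _ "\<lambda>x. Undec"])
  by (simp add: simps)

lemma w6: "weak {InTo, InFrom, OutTo, UndecFrom}"
  unfolding weak_def
  apply (rule exI[of _ "{0,1}"], rule exI[of _ "{(0,1)}"], rule exI[of _ "\<lambda>x. if x = 0 then In else Undec"])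
  by (simp add: simps)

lemma ball_cond: "(\<forall>x\<in>C. P x) \<longleftrightarrow> (InTo\<in>C \<longrightarrow> P InTo) \<and> (InFrom\<in>C \<longrightarrow> P InFrom) \<and> (OutTo\<in>C \<longrightarrow> P OutTo)
   \<and> (OutFrom\<in>C \<longrightarrow> P OutFrom) \<and> (UndecTo\<in>C \<longrightarrow> P UndecTo) \<and> (UndecFrom\<in>C \<longrightarrow> P UndecFrom)"
proof -
  have "(\<forall>x\<in>C. P x) \<longleftrightarrow> (\<forall>x\<in>UNIV. x\<in>C \<longrightarrow> P x)" by auto
  then show ?thesis by (simp add: UNIV_cond)
qed
lemma bex_cond: "(\<exists>x\<in>C. P x) \<longleftrightarrow> (InTo\<in>C \<and> P InTo) \<or> (InFrom\<in>C \<and> P InFrom) \<or> (OutTo\<in>C \<and> P OutTo)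
   \<or> (OutFrom\<in>C \<and> P OutFrom) \<or> (UndecTo\<in>C \<and> P UndecTo) \<or> (UndecFrom\<in>C \<and> P UndecFrom)"
proof -
  have "(\<exists>x\<in>C. P x) \<longleftrightarrow> (\<exists>x\<in>UNIV. x\<in>C \<and> P x)" by auto
  then show ?thesis by (simp add: UNIV_cond)
qed
lemma correct_good: "correct C \<longleftrightarrow> good C"
proof
  assume c: "correct C"
  show "good C"
  proof (rule ccontr)
    assume "\<not> good C"
    then have "C \<subseteq> {InFrom, OutTo, UndecTo, UndecFrom} \<or> C \<subseteq> {InFrom, OutTo, OutFrom, UndecTo}
      \<or> C \<subseteq> {InTo, OutFrom, UndecTo, UndecFrom} \<or> C \<subseteq> {InTo, InFrom, OutFrom, UndecTo}
      \<or> C \<subseteq> {InTo, OutTo, OutFrom, UndecFrom} \<or> C \<subseteq> {InTo, InFrom, OutTo, UndecFrom}"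
      unfolding good_def subset_eq ball_cond
      by (cases "InTo\<in>C"; cases "InFrom\<in>C"; cases "OutTo\<in>C"; cases "OutFrom\<in>C"; cases "UndecTo\<in>C"; cases "UndecFrom\<in>C"; simp)
    then have "weak C" using w1 w2 w3 w4 w5 w6 weak_mono by blast
    then show False using c weak_iff by blast
  qed
qed (rule good_correct)

lemma set_eq_cond: "C = D \<longleftrightarrow> (InTo\<in>C \<longleftrightarrow> InTo\<in>D) \<and> (InFrom\<in>C \<longleftrightarrow> InFrom\<in>D) \<and> (OutTo\<in>C \<longleftrightarrow> OutTo\<in>D)
   \<and> (OutFrom\<in>C \<longleftrightarrow> OutFrom\<in>D) \<and> (UndecTo\<in>C \<longleftrightarrow> UndecTo\<in>D) \<and> (UndecFrom\<in>C \<longleftrightarrow> UndecFrom\<in>D)"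
proof -
  have "C = D \<longleftrightarrow> (\<forall>x\<in>UNIV. x\<in>C \<longleftrightarrow> x\<in>D)" by auto
  then show ?thesis by (simp add: UNIV_cond)
qed
lemma card_cond: "card C = (if InTo\<in>C then 1 else 0) + (if InFrom\<in>C then 1 else 0) + (if OutTo\<in>C then 1 else 0)
   + (if OutFrom\<in>C then 1 else 0) + (if UndecTo\<in>C then 1 else 0) + (if UndecFrom\<in>C then (1::nat) else 0)"
proof -
  have "card C = (\<Sum>x\<in>UNIV. if x \<in> C then 1 else 0)"
    by (simp add: sum.If_cases)
  then show ?thesis by (simp add: UNIV_cond)
qed

lemma cnr: "correct_nonredundant C \<longleftrightarrow> good C \<and> (\<forall>x\<in>C. \<not> good (C - {x}))"
proof
  assume "correct_nonredundant C"
  then have g: "good C" and w: "\<And>C'. C' \<subset> C \<Longrightarrow> \<not> good C'"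
    unfolding correct_nonredundant_def weak_iff correct_good by auto
  have "\<forall>x\<in>C. \<not> good (C - {x})"
  proof
    fix x assume "x \<in> C"
    then have "C - {x} \<subset> C" by blast
    then show "\<not> good (C - {x})" by (rule w)
  qed
  with g show "good C \<and> (\<forall>x\<in>C. \<not> good (C - {x}))" by blast
next
  assume a: "good C \<and> (\<forall>x\<in>C. \<not> good (C - {x}))"
  have "\<not> good C'" if "C' \<subset> C" for C'
  proof
    assume "good C'"
    from that obtain x where "x \<in> C" "C' \<subseteq> C - {x}" by blast
    then show False using a good_mono \<open>good C'\<close> by blast
  qed
  then show "correct_nonredundant C"
    unfolding correct_nonredundant_def weak_iff correct_good using a by blast
qed

lemma red: "redundant C \<longleftrightarrow> good C \<and> (\<exists>x\<in>C. good (C - {x}))"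
proof
  assume "redundant C"
  then obtain C' where g: "good C" "C' \<subset> C" "good C'"
    unfolding redundant_def correct_good by blast
  then obtain x where "x \<in> C" "C' \<subseteq> C - {x}" by blast
  then show "good C \<and> (\<exists>x\<in>C. good (C - {x}))" using g good_mono by blast
next
  assume a: "good C \<and> (\<exists>x\<in>C. good (C - {x}))"
  then obtain x where "x \<in> C" "good (C - {x})" by blast
  then have "C - {x} \<subset> C" by blast
  then show "redundant C" unfolding redundant_def correct_good using a \<open>good (C - {x})\<close> by blast
qed

theorem corollary1:
  shows "(\<forall>C :: cond set. card C \<le> 2 \<longrightarrow> weak C)
   \<and> (\<forall>C :: cond set. card C = 3 \<longrightarrow>
        ((C = {InTo, OutTo, UndecTo} \<or> C = {InFrom, OutFrom, UndecFrom}) \<longrightarrow> correct_nonredundant C)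
      \<and> (\<not> (C = {InTo, OutTo, UndecTo} \<or> C = {InFrom, OutFrom, UndecFrom}) \<longrightarrow> weak C))
   \<and> (\<forall>C :: cond set. card C = 4 \<longrightarrow>
        ((C = {InTo, InFrom, OutTo, OutFrom} \<or> C = {OutTo, OutFrom, UndecTo, UndecFrom}
          \<or> C = {InTo, InFrom, UndecTo, UndecFrom}) \<longrightarrow> correct_nonredundant C)
      \<and> ((C = {UndecTo, UndecFrom, InTo, OutFrom} \<or> C = {UndecTo, UndecFrom, InFrom, OutTo}
          \<or> C = {OutTo, OutFrom, InTo, UndecFrom} \<or> C = {OutTo, OutFrom, InFrom, UndecTo}
          \<or> C = {InTo, InFrom, OutTo, UndecFrom} \<or> C = {InTo, InFrom, OutFrom, UndecTo}) \<longrightarrow> weak C)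
      \<and> (\<not> (C = {InTo, InFrom, OutTo, OutFrom} \<or> C = {OutTo, OutFrom, UndecTo, UndecFrom}
          \<or> C = {InTo, InFrom, UndecTo, UndecFrom}
          \<or> C = {UndecTo, UndecFrom, InTo, OutFrom} \<or> C = {UndecTo, UndecFrom, InFrom, OutTo}
          \<or> C = {OutTo, OutFrom, InTo, UndecFrom} \<or> C = {OutTo, OutFrom, InFrom, UndecTo}
          \<or> C = {InTo, InFrom, OutTo, UndecFrom} \<or> C = {InTo, InFrom, OutFrom, UndecTo})
         \<longrightarrow> redundant C))
   \<and> (\<forall>C :: cond set. card C \<ge> 5 \<longrightarrow> redundant C)"
  unfolding weak_iff correct_good cnr red
  unfolding set_eq_cond card_cond ball_cond bex_cond
  apply (intro conjI allI)
  subgoal for C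
    by (cases "InTo\<in>C"; cases "InFrom\<in>C"; cases "OutTo\<in>C"; cases "OutFrom\<in>C"; cases "UndecTo\<in>C"; cases "UndecFrom\<in>C"; simp add: good_def)
  subgoal for C
    by (cases "InTo\<in>C"; cases "InFrom\<in>C"; cases "OutTo\<in>C"; cases "OutFrom\<in>C"; cases "UndecTo\<in>C"; cases "UndecFrom\<in>C"; simp add: good_def)
  subgoal for C
    by (cases "InTo\<in>C"; cases "InFrom\<in>C"; cases "OutTo\<in>C"; cases "OutFrom\<in>C"; cases "UndecTo\<in>C"; cases "UndecFrom\<in>C"; simp add: good_def)
  subgoal for C
    by (cases "InTo\<in>C"; cases "InFrom\<in>C"; cases "OutTo\<in>C"; cases "OutFrom\<in>C"; cases "UndecTo\<in>C"; cases "UndecFrom\<in>C"; simp add: good_def)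
  done

end
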